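(* Let $k$ be an algebraically closed field, $\ell$ a non-trivial extension field of $k$, and $V,W$ be $k$-vector spaces. Suppose there exist $k$-linear maps $f,g\colon V\to W$ such that for every pair of scalars $\lambda,\mu\in\ell$, not both zero, the map $\operatorname{Hom}_k(\lambda,f)+\operatorname{Hom}_k(\mu,g)\colon\operatorname{Hom}_k(\ell,V)\to\operatorname{Hom}_k(\ell,W)$ is an isomorphism. Then $V=0=W$.
   Context: Here $\lambda$ and $\mu$ denote the $k$-linear maps $\ell\to\ell$ given by multiplication by $\lambda$ and $\mu$, so $\operatorname{Hom}_k(\lambda,f)$ sends $h\colon\ell\to V$ to $f\circ h\circ(\lambda\cdot-)$. *)

theory Defs
  imports "HOL-Computational_Algebra.Polynomial"
begin

(* k-vector space structure on an extension field l, given via a field embedding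
   phi : k -> l : scalar c acts on x by multiplication with phi c. *)
definition ext_scale :: "('k::field \<Rightarrow> 'l::field) \<Rightarrow> 'k \<Rightarrow> 'l \<Rightarrow> 'l" where
  "ext_scale \<phi> c x = \<phi> c * x"

definition Hom_k :: "('k::field \<Rightarrow> 'l::field) \<Rightarrow> ('k \<Rightarrow> 'v::ab_group_add \<Rightarrow> 'v) \<Rightarrow> ('l \<Rightarrow> 'v) set" where
  "Hom_k \<phi> sV = {h. Vector_Spaces.linear (ext_scale \<phi>) sV h}"

(* Hom_k(lambda, f) + Hom_k(mu, g) : h |-> f o h o (lambda * -) + g o h o (mu * -) *)
definition pencil_map :: "'l::field \<Rightarrow> ('v \<Rightarrow> 'w::ab_group_add) \<Rightarrow> 'l \<Rightarrow> ('v \<Rightarrow> 'w) \<Rightarrow> ('l \<Rightarrow> 'v) \<Rightarrow> ('l \<Rightarrow> 'w)" where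
  "pencil_map a f b g h = (\<lambda>x. f (h (a * x)) + g (h (b * x)))"

end

theory Submission imports Defs "HOL-Computational_Algebra.Fraction_Field"
begin

locale polyop_ctx = vector_space s for s :: "'k::field \<Rightarrow> 'v::ab_group_add \<Rightarrow> 'v" (infixr "*s" 75) +
  fixes B :: "'v \<Rightarrow> 'v"
  assumes B_add: "B (x + y) = B x + B y" and B_scale: "B (c *s x) = c *s B x"
begin

definition polyop :: "'k poly \<Rightarrow> 'v \<Rightarrow> 'v" where
  "polyop p v = (\<Sum>i<Suc (degree p). coeff p i *s (B ^^ i) v)"

lemma B_zero: "B 0 = 0"
  using B_add[of 0 0] by simp

lemma B_sum: "B (sum f A) = (\<Sum>a\<in>A. B (f a))"
  by (induction A rule: infinite_finite_induct) (auto simp: B_add B_zero)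

lemma polyop_bound: "degree p < n \<Longrightarrow> polyop p v = (\<Sum>i<n. coeff p i *s (B ^^ i) v)"
  unfolding polyop_def
  by (rule sum.mono_neutral_left) (auto simp: coeff_eq_0)

lemma polyop_pCons: "polyop (pCons a p) v = a *s v + B (polyop p v)"
proof -
  have "polyop (pCons a p) v = (\<Sum>i<Suc (Suc (degree p)). coeff (pCons a p) i *s (B ^^ i) v)"
    by (rule polyop_bound) (simp add: degree_pCons_le le_imp_less_Suc)
  also have "\<dots> = a *s v + (\<Sum>i<Suc (degree p). coeff p i *s (B ^^ Suc i) v)"
    by (subst sum.lessThan_Suc_shift) simp
  also have "(\<Sum>i<Suc (degree p). coeff p i *s (B ^^ Suc i) v) = B (polyop p v)"
    unfolding polyop_def B_sum by (simp add: B_scale)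
  finally show ?thesis .
qed

lemma polyop_0[simp]: "polyop 0 v = 0"
  by (simp add: polyop_def)

lemma polyop_add: "polyop (p + q) v = polyop p v + polyop q v"
proof -
  define n where "n = Suc (max (degree p) (degree q))"
  have "polyop (p + q) v = (\<Sum>i<n. coeff (p+q) i *s (B ^^ i) v)"
    by (rule polyop_bound) (metis degree_add_le_max le_imp_less_Suc n_def)
  also have "\<dots> = (\<Sum>i<n. coeff p i *s (B ^^ i) v) + (\<Sum>i<n. coeff q i *s (B ^^ i) v)"
    by (simp add: sum.distrib scale_left_distrib)
  also have "\<dots> = polyop p v + polyop q v"
    by (simp add: polyop_bound[of p n] polyop_bound[of q n] n_def del: sum.lessThan_Suc)
  finally show ?thesis .
qed

lemma polyop_smult: "polyop (smult c p) v = c *s polyop p v"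
proof -
  have "polyop (smult c p) v = (\<Sum>i<Suc (degree p). coeff (smult c p) i *s (B ^^ i) v)"
    by (rule polyop_bound) (simp add: le_imp_less_Suc)
  also have "\<dots> = c *s polyop p v"
    by (simp add: polyop_def scale_sum_right scale_scale del: sum.lessThan_Suc)
  finally show ?thesis .
qed

lemma polyop_vadd: "polyop p (u + v) = polyop p u + polyop p v"
  by (induction p) (simp_all add: polyop_pCons B_add algebra_simps)

lemma polyop_vscale: "polyop p (c *s v) = c *s polyop p v"
  by (induction p) (simp_all add: polyop_pCons B_scale scale_right_distrib)

lemma polyop_B: "polyop p (B v) = B (polyop p v)"
  by (induction p) (simp_all add: polyop_pCons B_scale B_add B_zero)

lemma polyop_mult: "polyop (p * q) v = polyop p (polyop q v)"
proof (induction p)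
  case 0 then show ?case by simp
next
  case (pCons a p)
  have "polyop (pCons a p * q) v = polyop (smult a q) v + polyop (pCons 0 (p * q)) v"
    by (simp add: polyop_add)
  also have "\<dots> = polyop (pCons a p) (polyop q v)"
    by (simp add: polyop_smult polyop_pCons pCons.IH)
  finally show ?case .
qed

lemma polyop_const: "polyop [:c:] v = c *s v"
  by (simp add: polyop_pCons B_zero)

lemma polyop_one: "polyop 1 v = v"
  by (simp add: one_pCons polyop_const)

lemma polyop_lin: "polyop [:- x, 1:] v = B v - x *s v"
  by (simp add: polyop_pCons polyop_const B_zero)

lemma bij_scale: "c \<noteq> 0 \<Longrightarrow> bij (\<lambda>v. c *s v)"
  by (rule o_bij[where g="\<lambda>v. inverse c *s v"]) (auto simp: scale_scale fun_eq_iff)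

end

locale polyop_bij = polyop_ctx s B for s :: "'k::alg_closed_field \<Rightarrow> 'v::ab_group_add \<Rightarrow> 'v" (infixr "*s" 75) and B +
  assumes shift_bij: "\<And>c. bij (\<lambda>u. B u - c *s u)"
begin

lemma polyop_bij: "p \<noteq> 0 \<Longrightarrow> bij (polyop p)"
proof (induction "degree p" arbitrary: p rule: less_induct)
  case (less p)
  show ?case
  proof (cases "degree p = 0")
    case True
    then obtain c where p: "p = [:c:]" by (metis degree_eq_zeroE)
    with less.prems have "c \<noteq> 0" by auto
    then show ?thesis using bij_scale unfolding p polyop_const by (simp add: fun_eq_iff)
  next
    case False
    then obtain x where x: "poly p x = 0"
      using alg_closed_imp_poly_has_root by blast
    hence "[:-x, 1:] dvd p"
      using poly_eq_0_iff_dvd by blast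
    then obtain q where p_eq: "p = [:-x, 1:] * q"
      by (elim dvdE)
    have "q \<noteq> 0"
      using less.prems p_eq by auto
    moreover from this have deg: "degree p = Suc (degree q)"
      unfolding p_eq by (subst degree_mult_eq) auto
    ultimately have "bij (polyop q)" using less.hyps by auto
    moreover have "polyop p = (\<lambda>u. B u - x *s u) \<circ> polyop q"
      unfolding fun_eq_iff o_def by (simp only: p_eq polyop_mult polyop_lin) simp
    ultimately show ?thesis using shift_bij bij_comp by metis
  qed
qed

end


context polyop_bij begin

lemma polyop_comm: "polyop p (polyop q v) = polyop q (polyop p v)"
  by (metis polyop_mult mult.commute)

definition fev :: "'v \<Rightarrow> 'k poly fract \<Rightarrow> 'v" where
  "fev v q = (SOME u. \<exists>a b. b \<noteq> 0 \<and> q = Fract a b \<and> polyop b u = polyop a v)"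

lemma fev_eq:
  assumes b: "b \<noteq> 0" and u: "polyop b u = polyop a v"
  shows "fev v (Fract a b) = u"
proof -
  have "\<exists>u. \<exists>a' b'. b' \<noteq> 0 \<and> Fract a b = Fract a' b' \<and> polyop b' u = polyop a' v"
    using b u by blast
  from someI_ex[OF this] obtain a' b' where ab: "b' \<noteq> 0" "Fract a b = Fract a' b'"
    "polyop b' (fev v (Fract a b)) = polyop a' v"
    unfolding fev_def by blast
  define u' where "u' = fev v (Fract a b)"
  have eq: "a * b' = a' * b" using ab b eq_fract(1) by blast
  have "polyop (b * b') u' = polyop b (polyop a' v)"
    using ab by (simp add: polyop_mult u'_def)
  also have "\<dots> = polyop (a' * b) v" by (simp add: polyop_mult polyop_comm)
  also have "\<dots> = polyop (a * b') v" by (simp add: eq)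
  also have "\<dots> = polyop b' (polyop b u)" by (simp add: polyop_mult polyop_comm u)
  also have "\<dots> = polyop (b * b') u" by (simp add: polyop_mult polyop_comm)
  finally have "polyop (b * b') u' = polyop (b * b') u" .
  moreover have "bij (polyop (b * b'))" using ab b by (intro polyop_bij) simp
  ultimately show ?thesis unfolding u'_def by (metis bij_def injD)
qed

lemma fev_Fract:
  assumes b: "b \<noteq> 0"
  shows "polyop b (fev v (Fract a b)) = polyop a v"
proof -
  obtain u where "polyop b u = polyop a v"
    using polyop_bij[OF b] by (metis bij_def surjD)
  with fev_eq[OF b this] show ?thesis by simp
qed

lemma fev_add: "fev v (q1 + q2) = fev v q1 + fev v q2"
proof -
  obtain a b where q1: "q1 = Fract a b" "b \<noteq> 0" by (cases q1)
  obtain c d where q2: "q2 = Fract c d" "d \<noteq> 0" by (cases q2)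
  have "polyop (b * d) (fev v q1 + fev v q2) = polyop (a * d + c * b) v"
    using q1 q2 by (simp add: polyop_vadd polyop_mult polyop_add fev_Fract)
      (metis polyop_comm fev_Fract)
  then show ?thesis using q1 q2 by (simp add: fev_eq)
qed

lemma fev_const: "fev v (Fract [:c:] 1 * q) = c *s fev v q"
proof -
  obtain a b where q: "q = Fract a b" "b \<noteq> 0" by (cases q)
  have "polyop b (c *s fev v q) = polyop ([:c:] * a) v"
    using q by (simp add: polyop_vscale polyop_smult fev_Fract)
  then show ?thesis using q by (simp add: fev_eq)
qed

lemma fev_X: "fev v (Fract [:0,1:] 1 * q) = B (fev v q)"
proof -
  obtain a b where q: "q = Fract a b" "b \<noteq> 0" by (cases q)
  have "polyop b (B (fev v q)) = polyop ([:0,1:] * a) v"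
    using q by (simp add: polyop_B polyop_pCons fev_Fract)
  then show ?thesis using q by (simp add: fev_eq)
qed

lemma fev_one: "fev v 1 = v"
  unfolding One_fract_def by (rule fev_eq) (simp_all add: polyop_one)

end


lemma vs_ext_scale:
  fixes \<phi> :: "'k::field \<Rightarrow> 'l::field"
  assumes hom_add: "\<And>a b. \<phi> (a + b) = \<phi> a + \<phi> b"
    and hom_mult: "\<And>a b. \<phi> (a * b) = \<phi> a * \<phi> b"
    and hom_one: "\<phi> 1 = 1"
  shows "vector_space (ext_scale \<phi>)"
  by unfold_locales (simp_all add: ext_scale_def hom_add hom_mult hom_one algebra_simps)

lemma vs_self: "vector_space ((*) :: 'a::field \<Rightarrow> 'a \<Rightarrow> 'a)"
  by unfold_locales (simp_all add: algebra_simps)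

locale ell_ctx =
  fixes \<phi> :: "'k::alg_closed_field \<Rightarrow> 'l::field" and t :: 'l
  assumes hom_add: "\<And>a b. \<phi> (a + b) = \<phi> a + \<phi> b"
    and hom_mult: "\<And>a b. \<phi> (a * b) = \<phi> a * \<phi> b"
    and hom_one: "\<phi> 1 = 1"
    and t: "t \<notin> range \<phi>"

sublocale ell_ctx \<subseteq> polyop_bij "ext_scale \<phi>" "(*) t"
proof -
  interpret vector_space "ext_scale \<phi>" by (rule vs_ext_scale) (fact hom_add hom_mult hom_one)+
  show "polyop_bij (ext_scale \<phi>) ((*) t)"
  proof (unfold_locales)
    fix c
    have ne: "t - \<phi> c \<noteq> 0" using t by auto
    have "(\<lambda>u. t * u - ext_scale \<phi> c u) = (\<lambda>u. (t - \<phi> c) * u)"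
      by (auto simp: ext_scale_def algebra_simps)
    moreover have "bij (\<lambda>u. (t - \<phi> c) * u)"
      by (rule o_bij[where g="\<lambda>v. inverse (t - \<phi> c) * v"]) (use ne in \<open>auto simp: fun_eq_iff mult.assoc[symmetric]\<close>)
    ultimately show "bij (\<lambda>u. t * u - ext_scale \<phi> c u)" by simp
  qed (simp_all add: ext_scale_def algebra_simps)
qed

context ell_ctx begin

lemma polyop_right: "polyop p y = polyop p 1 * y"
proof (induction p)
  case 0 then show ?case by simp
next
  case (pCons a p)
  have "polyop (pCons a p) y = ext_scale \<phi> a y + t * (polyop p 1 * y)"
    by (simp add: polyop_pCons pCons.IH)
  also have "\<dots> = (ext_scale \<phi> a 1 + t * polyop p 1) * y"
    by (simp add: ext_scale_def algebra_simps)
  also have "\<dots> = polyop (pCons a p) 1 * y" by (simp add: polyop_pCons)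
  finally show ?case .
qed

lemma E_mult: "polyop (p * q) 1 = polyop p 1 * polyop q 1"
  by (metis polyop_mult polyop_right mult.commute)

lemma E_nz: "p \<noteq> 0 \<Longrightarrow> polyop p 1 \<noteq> 0"
  using polyop_bij[of p] polyop_right[of p 0]
  by (metis bij_def injD mult_zero_right zero_neq_one)

definition e :: "'k poly fract \<Rightarrow> 'l" where "e q = fev 1 q"

lemma e_add: "e (a + b) = e a + e b" by (simp add: e_def fev_add)
lemma e_one: "e 1 = 1" by (simp add: e_def fev_one)

lemma e_mult: "e (q1 * q2) = e q1 * e q2"
proof -
  obtain a b where q1: "q1 = Fract a b" "b \<noteq> 0" by (cases q1)
  obtain c d where q2: "q2 = Fract c d" "d \<noteq> 0" by (cases q2)
  have "polyop (b * d) (e q1 * e q2) = (polyop b (e q1)) * (polyop d (e q2))"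
    by (subst (1 2 3) polyop_right) (simp add: E_mult)
  also have "\<dots> = polyop (a * c) 1"
    using q1 q2 by (simp add: e_def fev_Fract E_mult)
  finally show ?thesis using q1 q2 by (simp add: e_def fev_eq)
qed

lemma e_const: "e (Fract [:c:] 1) = \<phi> c"
  using fev_const[of 1 c 1] by (simp add: e_def fev_one ext_scale_def)

lemma e_X: "e (Fract [:0,1:] 1) = t"
  using fev_X[of 1 1] by (simp add: e_def fev_one)

lemma vs_K: "vector_space (\<lambda>q x. e q * x)"
  by unfold_locales (simp_all add: e_add e_mult e_one algebra_simps)

end


lemma hom_single:
  assumes vsl: "vector_space (ext_scale \<phi>)" and V: "vector_space sV"
    and \<psi>: "Vector_Spaces.linear (ext_scale \<phi>) (*) \<psi>"
  shows "(\<lambda>y. sV (\<psi> y) u) \<in> Hom_k \<phi> sV"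
proof -
  interpret V: vector_space sV by fact
  have a: "\<psi> (x + y) = \<psi> x + \<psi> y" "\<psi> (ext_scale \<phi> c x) = c * \<psi> x" for x y c
    using \<psi> unfolding Vector_Spaces.linear_iff by auto
  show ?thesis unfolding Hom_k_def Vector_Spaces.linear_iff
    by (auto simp: vsl V a V.scale_left_distrib)
qed

lemma D_bij:
  assumes vsl: "vector_space (ext_scale \<phi>)" and V: "vector_space sV" and W: "vector_space sW"
    and \<psi>: "Vector_Spaces.linear (ext_scale \<phi>) (*) \<psi>" and \<psi>1: "\<psi> 1 = 1"
    and P: "\<And>h. h \<in> Hom_k \<phi> sV \<Longrightarrow> pencil_map a f b g h = (\<lambda>x. D (h x))"
    and bij: "bij_betw (pencil_map a f b g) (Hom_k \<phi> sV) (Hom_k \<phi> sW)"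
    and Ds: "\<And>c u. D (sV c u) = sW c (D u)"
  shows "bij D"
proof -
  interpret V: vector_space sV by fact
  interpret W: vector_space sW by fact
  let ?h = "\<lambda>u y. sV (\<psi> y) u"
  have hV: "?h u \<in> Hom_k \<phi> sV" for u by (rule hom_single[OF vsl V \<psi>])
  have hW: "(\<lambda>y. sW (\<psi> y) w) \<in> Hom_k \<phi> sW" for w by (rule hom_single[OF vsl W \<psi>])
  have "inj D"
  proof (rule injI)
    fix u u' assume "D u = D u'"
    then have "pencil_map a f b g (?h u) = pencil_map a f b g (?h u')"
      using P[OF hV] P[OF hV] by (simp add: fun_eq_iff Ds)
    then have "?h u = ?h u'" using bij hV unfolding bij_betw_def inj_on_def by blast
    then show "u = u'" by (metis \<psi>1 V.scale_one)
  qed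
  moreover have "surj D"
  proof -
    { fix w
      obtain h where h: "h \<in> Hom_k \<phi> sV" "pencil_map a f b g h = (\<lambda>y. sW (\<psi> y) w)"
        using bij hW unfolding bij_betw_def by (metis imageE)
      then have "D (h 1) = w" using P[OF h(1)] \<psi>1 by (metis W.scale_one)
      then have "w \<in> range D" by blast }
    then show ?thesis by blast
  qed
  ultimately show ?thesis by (simp add: bij_def)
qed

theorem lemma4p1:
  fixes \<phi> :: "'k::alg_closed_field \<Rightarrow> 'l::field"
    and sV :: "'k \<Rightarrow> 'v::ab_group_add \<Rightarrow> 'v"
    and sW :: "'k \<Rightarrow> 'w::ab_group_add \<Rightarrow> 'w"
    and f g :: "'v \<Rightarrow> 'w"
  assumes hom_add: "\<And>a b. \<phi> (a + b) = \<phi> a + \<phi> b"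
    and hom_mult: "\<And>a b. \<phi> (a * b) = \<phi> a * \<phi> b"
    and hom_one: "\<phi> 1 = 1"
    and nontrivial: "\<not> surj \<phi>"
    and V: "vector_space sV"
    and W: "vector_space sW"
    and f: "Vector_Spaces.linear sV sW f"
    and g: "Vector_Spaces.linear sV sW g"
    and iso: "\<And>a b :: 'l. (a, b) \<noteq> (0, 0) \<Longrightarrow>
               bij_betw (pencil_map a f b g) (Hom_k \<phi> sV) (Hom_k \<phi> sW)"
  shows "(\<forall>v::'v. v = 0) \<and> (\<forall>w::'w. w = 0)"
proof -
  interpret V: vector_space sV by fact
  interpret W: vector_space sW by fact
  have vsl: "vector_space (ext_scale \<phi>)" by (rule vs_ext_scale) (fact hom_add hom_mult hom_one)+
  interpret L: vector_space "ext_scale \<phi>" by fact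
  interpret pk: vector_space_pair "ext_scale \<phi>" "(*) :: 'k \<Rightarrow> 'k \<Rightarrow> 'k"
    by (intro vector_space_pair.intro vsl vs_self)
  define \<psi> where "\<psi> = pk.construct {1} (\<lambda>_. 1)"
  have ind1: "L.independent {1}" by simp
  have \<psi>: "Vector_Spaces.linear (ext_scale \<phi>) (*) \<psi>"
    unfolding \<psi>_def by (rule pk.linear_construct[OF ind1])
  have \<psi>1: "\<psi> 1 = 1" unfolding \<psi>_def by (rule pk.construct_basis[OF ind1]) simp
  have fa: "f (x + y) = f x + f y" "f (sV c x) = sW c (f x)" for x y c
    using f unfolding Vector_Spaces.linear_iff by auto
  have ga: "g (x + y) = g x + g y" "g (sV c x) = sW c (g x)" for x y c
    using g unfolding Vector_Spaces.linear_iff by auto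
  have f0: "f 0 = 0" by (metis add_cancel_right_right fa(1))
  have g0: "g 0 = 0" by (metis add_cancel_right_right ga(1))
  have fneg: "f (- u) = - f u" for u by (metis add_eq_0_iff fa(1) f0 add.right_inverse)
  have hlin: "h (x + y) = h x + h y" "h (ext_scale \<phi> c x) = sV c (h x)"
    if "h \<in> Hom_k \<phi> sV" for h x y c
    using that unfolding Hom_k_def Vector_Spaces.linear_iff by auto
  have h0: "h 0 = 0" if "h \<in> Hom_k \<phi> sV" for h
    by (metis add_cancel_right_right hlin(1)[OF that])
  have phi_neg: "\<phi> (- c) = - \<phi> c" for c
    by (metis add.right_inverse add_eq_0_iff hom_add add_cancel_right_right)
  have fbij: "bij f"
  proof (rule D_bij[OF vsl V W \<psi> \<psi>1 _ iso[of 1 0]])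
    fix h assume h: "h \<in> Hom_k \<phi> sV"
    show "pencil_map 1 f 0 g h = (\<lambda>x. f (h x))"
      by (simp add: pencil_map_def h0[OF h] g0)
  qed (simp_all add: fa)
  have Dbij: "bij (\<lambda>u. g u - sW c (f u))" for c
  proof (rule D_bij[OF vsl V W \<psi> \<psi>1 _ iso[of "- \<phi> c" 1]])
    fix h assume h: "h \<in> Hom_k \<phi> sV"
    have "h (- \<phi> c * x) = sV (- c) (h x)" for x
      using hlin(2)[OF h, of "-c" x] by (simp add: ext_scale_def phi_neg)
    then show "pencil_map (- \<phi> c) f 1 g h = (\<lambda>x. g (h x) - sW c (f (h x)))"
      by (simp add: pencil_map_def fa fneg W.scale_minus_left fun_eq_iff)
  next
    fix a u
    show "g (sV a u) - sW c (f (sV a u)) = sW a (g u - sW c (f u))"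
      by (simp add: fa ga W.scale_right_diff_distrib W.scale_scale mult.commute)
  qed simp
  define B where "B u = inv f (g u)" for u
  have fB: "f (B u) = g u" for u unfolding B_def using fbij by (simp add: bij_is_surj surj_f_inv_f)
  have finj: "f x = f y \<Longrightarrow> x = y" for x y using fbij by (simp add: bij_is_inj inj_eq)
  have B_add: "B (x + y) = B x + B y" for x y by (rule finj) (simp add: fa ga fB)
  have B_scale: "B (sV c x) = sV c (B x)" for c x by (rule finj) (simp add: fa ga fB)
  have shift: "bij (\<lambda>u. B u - sV c u)" for c
  proof -
    have fd: "f (x - y) = f x - f y" for x y by (metis add_diff_cancel fa(1) diff_add_cancel)
    have "(\<lambda>u. B u - sV c u) = inv f \<circ> (\<lambda>u. g u - sW c (f u))"
    proof
      fix u
      have "f (B u - sV c u) = g u - sW c (f u)" by (simp add: fd fa fB)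
      then show "B u - sV c u = (inv f \<circ> (\<lambda>u. g u - sW c (f u))) u"
        by (metis bij_is_inj comp_apply fbij inv_f_f)
    qed
    then show ?thesis using Dbij bij_comp bij_imp_bij_inv fbij by metis
  qed
  interpret pb: polyop_bij sV B
    by unfold_locales (simp_all add: B_add B_scale shift)
  obtain t where t: "t \<notin> range \<phi>" using nontrivial by blast
  interpret ell: ell_ctx \<phi> t by unfold_locales (simp_all add: hom_add hom_mult hom_one t)
  have vsK: "vector_space (\<lambda>q x. ell.e q * x)" by (rule ell.vs_K)
  interpret LK: vector_space "\<lambda>q x. ell.e q * x" by fact
  interpret pK: vector_space_pair "\<lambda>q x. ell.e q * x" "(*) :: 'k poly fract \<Rightarrow> _ \<Rightarrow> _"
    by (intro vector_space_pair.intro vsK vs_self)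
  define \<psi>' where "\<psi>' = pK.construct {1} (\<lambda>_. 1)"
  have ind1': "LK.independent {1}" by simp
  have \<psi>': "Vector_Spaces.linear (\<lambda>q x. ell.e q * x) (*) \<psi>'"
    unfolding \<psi>'_def by (rule pK.linear_construct[OF ind1'])
  have \<psi>'1: "\<psi>' 1 = 1" unfolding \<psi>'_def by (rule pK.construct_basis[OF ind1']) simp
  have \<psi>'a: "\<psi>' (x + y) = \<psi>' x + \<psi>' y" "\<psi>' (ell.e q * x) = q * \<psi>' x" for x y q
    using \<psi>' unfolding Vector_Spaces.linear_iff by auto
  have V0: "\<forall>v::'v. v = 0"
  proof (rule ccontr)
    assume "\<not> (\<forall>v::'v. v = 0)"
    then obtain v :: 'v where v: "v \<noteq> 0" by blast
    define h where "h y = pb.fev v (\<psi>' y)" for y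
    have h_add: "h (x + y) = h x + h y" for x y by (simp add: h_def \<psi>'a pb.fev_add)
    have h_scale: "h (ext_scale \<phi> c x) = sV c (h x)" for c x
    proof -
      have "ext_scale \<phi> c x = ell.e (Fract [:c:] 1) * x" by (simp add: ext_scale_def ell.e_const)
      then show ?thesis by (simp add: h_def \<psi>'a pb.fev_const)
    qed
    have hH: "h \<in> Hom_k \<phi> sV" unfolding Hom_k_def Vector_Spaces.linear_iff
      by (auto simp: vsl V h_add h_scale)
    have h_t: "h (t * x) = B (h x)" for x
      using \<psi>'a(2)[of "Fract [:0,1:] 1" x] by (simp add: h_def ell.e_X pb.fev_X)
    have h1: "h 1 = v" by (simp add: h_def \<psi>'1 pb.fev_one)
    have zH: "(\<lambda>_. 0) \<in> Hom_k \<phi> sV" unfolding Hom_k_def Vector_Spaces.linear_iff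
      by (auto simp: vsl V)
    have hm: "h (- x) = - h x" for x
      using h_scale[of "-1" x] by (simp add: ext_scale_def phi_neg hom_one)
    have gneg: "g (- u) = - g u" for u by (metis add_eq_0_iff ga(1) g0 add.right_inverse)
    have "pencil_map t f (-1) g h = pencil_map t f (-1) g (\<lambda>_. 0)"
      by (simp add: pencil_map_def fun_eq_iff h_t fB hm gneg f0 g0)
    moreover have "(t, -1::'l) \<noteq> (0, 0)" by simp
    ultimately have "h = (\<lambda>_. 0)" using iso[of t "-1"] hH zH unfolding bij_betw_def inj_on_def by blast
    then show False using h1 v by simp
  qed
  have "\<forall>w::'w. w = 0"
  proof
    fix w :: 'w
    obtain u where "f u = w" using fbij by (metis bij_pointE)
    moreover have "u = 0" using V0 by blast
    ultimately show "w = 0" using f0 by simp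
  qed
  with V0 show ?thesis by blast
qed

end
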